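(* Let $0<p<1$ be fixed, $b=1/(1-p)$, and $c=c(n)=\lfloor \log_b n-\log_b[(\log_b n)(\log n)]\rfloor+2$. Let $X_c$ be the number of $c$-element vertex sets of $G(n,p,c)$ that are both dominating and tropical. Then $\mathbb{E}(X_c)\to\infty$ as $n\to\infty$.
   Context: $G(n,p)$ is the random graph on $n$ vertices in which each of the $\binom n2$ edges is present independently with probability $p$. For a positive integer $c$, $G(n,p,c)$ is obtained from $G(n,p)$ by colouring each vertex with one of the colours $1,\dots,c$ uniformly at random, independently of each other and of the edges. A vertex set is tropical if every one of the $c$ colours appears on at least one of its vertices. $\log$ denotes the natural logarithm. *)

theory Defs
  imports "HOL-Probability.Probability"
begin

text \<open>Vertices of G(n,p,c) are 0,...,n-1. An edge is a two-element set of vertices;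
  a graph is given by its edge indicator E :: nat set \<Rightarrow> bool, a colouring by col :: nat \<Rightarrow> nat
  with colours 1..c.\<close>

definition pairs :: "nat \<Rightarrow> nat set set" where
  "pairs n = {{i, j} | i j. i < n \<and> j < n \<and> i \<noteq> j}"

definition Gnp :: "nat \<Rightarrow> real \<Rightarrow> (nat set \<Rightarrow> bool) pmf" where
  "Gnp n p = Pi_pmf (pairs n) False (\<lambda>_. bernoulli_pmf p)"

definition colouring :: "nat \<Rightarrow> nat \<Rightarrow> (nat \<Rightarrow> nat) pmf" where
  "colouring n c = Pi_pmf {..<n} 0 (\<lambda>_. pmf_of_set {1..c})"

definition Gnpc :: "nat \<Rightarrow> real \<Rightarrow> nat \<Rightarrow> ((nat set \<Rightarrow> bool) \<times> (nat \<Rightarrow> nat)) pmf" where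
  "Gnpc n p c = pair_pmf (Gnp n p) (colouring n c)"

definition dominating :: "nat \<Rightarrow> (nat set \<Rightarrow> bool) \<Rightarrow> nat set \<Rightarrow> bool" where
  "dominating n E S \<longleftrightarrow> S \<subseteq> {..<n} \<and> (\<forall>v \<in> {..<n} - S. \<exists>u \<in> S. E {u, v})"

definition tropical :: "nat \<Rightarrow> (nat \<Rightarrow> nat) \<Rightarrow> nat set \<Rightarrow> bool" where
  "tropical c col S \<longleftrightarrow> (\<forall>k \<in> {1..c}. \<exists>v \<in> S. col v = k)"

definition Xc :: "nat \<Rightarrow> nat \<Rightarrow> (nat set \<Rightarrow> bool) \<times> (nat \<Rightarrow> nat) \<Rightarrow> nat" where
  "Xc n c \<omega> = card {S. S \<subseteq> {..<n} \<and> card S = c \<and> dominating n (fst \<omega>) S \<and> tropical c (snd \<omega>) S}"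

definition cfun :: "real \<Rightarrow> nat \<Rightarrow> nat" where
  "cfun p n = (let b = 1 / (1 - p) in
     nat (\<lfloor>log b (real n) - log b (log b (real n) * ln (real n))\<rfloor> + 2))"

end

theory Submission
  imports Defs "HOL-Combinatorics.Permutations" "HOL-Real_Asymp.Real_Asymp"
begin


lemma finite_pairs: "finite (pairs n)"
proof -
  have "pairs n \<subseteq> Pow {..<n}" unfolding pairs_def by auto
  thus ?thesis by (rule finite_subset) simp
qed

lemma prob_dom:
  fixes p :: real
  assumes p: "0 \<le> p" "p \<le> 1" and S: "S \<subseteq> {..<n}" "card S = c" and cn: "c < n"
  shows "measure_pmf.prob (Gnp n p) {E. dominating n E S} = (1 - (1-p)^c)^(n-c)"
proof -
  let ?M = "measure_pmf (Gnp n p)"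
  define V where "V = {..<n} - S"
  define K where "K = (\<lambda>v. (\<lambda>u. {u,v}) ` S)"
  have finS: "finite S" using S finite_subset by blast
  have cardV: "card V = n - c" unfolding V_def using S finS by (simp add: card_Diff_subset)
  have Vne: "V \<noteq> {}" using cardV cn by auto
  have finV: "finite V" unfolding V_def by simp
  have Ksub: "K v \<subseteq> pairs n" if "v \<in> V" for v
    using that S unfolding K_def V_def pairs_def by auto
  have cardK: "card (K v) = c" if "v \<in> V" for v
  proof -
    have "inj_on (\<lambda>u. {u,v}) S" using that unfolding V_def inj_on_def by (auto simp: doubleton_eq_iff)
    thus ?thesis unfolding K_def using S by (simp add: card_image)
  qed
  have disj: "disjoint_family_on K V"
    unfolding disjoint_family_on_def K_def V_def by (auto simp: doubleton_eq_iff)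
  have ind0: "prob_space.indep_vars (measure_pmf (Gnp n p)) (\<lambda>_. count_space (UNIV::bool set)) (\<lambda>x (f::nat set \<Rightarrow> bool). f x) (pairs n)"
    using indep_vars_Pi_pmf[OF finite_pairs, of n False "\<lambda>_. bernoulli_pmf p"] unfolding Gnp_def .
  have ind: "prob_space.indep_vars (measure_pmf (Gnp n p)) (\<lambda>v. PiM (K v) (\<lambda>_. count_space (UNIV::bool set))) (\<lambda>v (\<omega>::nat set \<Rightarrow> bool). restrict (\<lambda>e. \<omega> e) (K v)) V"
    by (rule prob_space.indep_vars_restrict[OF measure_pmf.prob_space_axioms ind0 Ksub disj])
  define A where "A = (\<lambda>v. {g \<in> space (PiM (K v) (\<lambda>_. count_space (UNIV::bool set))). \<exists>e\<in>K v. g e})"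
  have Ameas: "A v \<in> sets (PiM (K v) (\<lambda>_. count_space UNIV))" if "v \<in> V" for v
    unfolding A_def
    apply measurable
     apply (simp add: K_def finS)
    subgoal for i using measurable_component_singleton[of i "K v" "\<lambda>_. count_space (UNIV::bool set)"] by simp
    done
  have eq1: "measure_pmf.prob (Gnp n p) (\<Inter>v\<in>V. (\<lambda>\<omega>. restrict (\<lambda>e. \<omega> e) (K v)) -` A v \<inter> space ?M)
     = (\<Prod>v\<in>V. measure_pmf.prob (Gnp n p) ((\<lambda>\<omega>. restrict (\<lambda>e. \<omega> e) (K v)) -` A v \<inter> space ?M))"
    by (rule prob_space.indep_varsD[OF measure_pmf.prob_space_axioms ind Vne finV subset_refl Ameas])
  have pre: "(\<lambda>\<omega>. restrict (\<lambda>e. \<omega> e) (K v)) -` A v \<inter> space ?M = {\<omega>. \<exists>e\<in>K v. \<omega> e}" for v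
    unfolding A_def by (auto simp: space_PiM)
  have inter: "(\<Inter>v\<in>V. {\<omega>. \<exists>e\<in>K v. \<omega> e}) = {E. dominating n E S}"
    using S Vne unfolding dominating_def V_def K_def by auto
  have pv: "measure_pmf.prob (Gnp n p) {\<omega>. \<exists>e\<in>K v. \<omega> e} = 1 - (1-p)^c" if v: "v \<in> V" for v
  proof -
    have "{\<omega>. \<exists>e\<in>K v. \<omega> e} = UNIV - {\<omega>. \<forall>e\<in>K v. \<not> \<omega> e}" by auto
    hence "measure_pmf.prob (Gnp n p) {\<omega>. \<exists>e\<in>K v. \<omega> e} = 1 - measure_pmf.prob (Gnp n p) {\<omega>. \<forall>e\<in>K v. \<not> \<omega> e}"
      using measure_pmf.prob_compl[of "{\<omega>. \<forall>e\<in>K v. \<not> \<omega> e}" "Gnp n p"] by simp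
    also have "{\<omega>. \<forall>e\<in>K v. \<not> \<omega> e} = Pi (pairs n) (\<lambda>e. if e \<in> K v then {False} else UNIV)"
      using Ksub[OF v] by (auto simp: Pi_def)
    also have "measure_pmf.prob (Gnp n p) \<dots> = (\<Prod>e\<in>pairs n. measure_pmf.prob (bernoulli_pmf p) (if e \<in> K v then {False} else UNIV))"
      unfolding Gnp_def by (rule measure_Pi_pmf_Pi[OF finite_pairs])
    also have "\<dots> = (\<Prod>e\<in>K v. 1 - p)"
    proof (rule prod.mono_neutral_cong_right[OF finite_pairs Ksub[OF v]])
      show "\<forall>i\<in>pairs n - K v. measure_pmf.prob (bernoulli_pmf p) (if i \<in> K v then {False} else UNIV) = 1"
        by simp
      show "\<And>x. x \<in> K v \<Longrightarrow> measure_pmf.prob (bernoulli_pmf p) (if x \<in> K v then {False} else UNIV) = 1 - p"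
        using p by (simp add: measure_pmf_single)
    qed
    also have "\<dots> = (1-p)^c" using cardK[OF v] by simp
    finally show ?thesis .
  qed
  have "measure_pmf.prob (Gnp n p) {E. dominating n E S} = (\<Prod>v\<in>V. 1 - (1-p)^c)"
    using eq1 unfolding pre inter using pv by simp
  also have "\<dots> = (1 - (1-p)^c)^(n-c)" using cardV by simp
  finally show ?thesis .
qed


lemma prob_trop:
  assumes S: "S \<subseteq> {..<n}" "card S = c" and c: "c \<ge> 1"
  shows "measure_pmf.prob (colouring n c) {f. tropical c f S} \<ge> fact c / real c ^ c"
proof -
  have finS: "finite S" using S finite_subset by blast
  obtain h where h: "bij_betw h S {1..c}"
    using finite_same_card_bij[OF finS, of "{1..c}"] S by auto
  define P where "P = {\<pi>. \<pi> permutes {1..c}}"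
  define B where "B = (\<lambda>\<pi>. {f::nat\<Rightarrow>nat. \<forall>v\<in>S. f v = \<pi> (h v)})"
  have finP: "finite P" unfolding P_def by (rule finite_permutations) simp
  have cardP: "card P = fact c" unfolding P_def using card_permutations[of "{1..c}" c] by simp
  have disj: "disjoint_family_on B P"
  proof (unfold disjoint_family_on_def, intro ballI impI)
    fix \<pi> \<sigma> assume pi: "\<pi> \<in> P" and si: "\<sigma> \<in> P" and ne: "\<pi> \<noteq> \<sigma>"
    then obtain k where k: "\<pi> k \<noteq> \<sigma> k" by auto
    have "k \<in> {1..c}"
    proof (rule ccontr)
      assume "k \<notin> {1..c}"
      hence "\<pi> k = k" "\<sigma> k = k" using pi si unfolding P_def by (auto simp: permutes_def)
      thus False using k by simp
    qed
    then obtain v where v: "v \<in> S" "h v = k" using h by (metis bij_betw_def imageE)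
    show "B \<pi> \<inter> B \<sigma> = {}" unfolding B_def using v k by auto
  qed
  have sub: "(\<Union>\<pi>\<in>P. B \<pi>) \<subseteq> {f. tropical c f S}"
  proof
    fix f assume "f \<in> (\<Union>\<pi>\<in>P. B \<pi>)"
    then obtain \<pi> where pi: "\<pi> \<in> P" and f: "\<forall>v\<in>S. f v = \<pi> (h v)" unfolding B_def by auto
    show "f \<in> {f. tropical c f S}" unfolding tropical_def
    proof (intro CollectI ballI)
      fix k assume k: "k \<in> {1..c}"
      have "bij_betw \<pi> {1..c} {1..c}" using pi unfolding P_def by (simp add: permutes_imp_bij)
      then obtain j where j: "j \<in> {1..c}" "\<pi> j = k" using k by (metis bij_betw_def imageE)
      then obtain v where v: "v \<in> S" "h v = j" using h by (metis bij_betw_def imageE)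
      show "\<exists>v\<in>S. f v = k" using v j f by auto
    qed
  qed
  have mB: "measure_pmf.prob (colouring n c) (B \<pi>) = (1 / real c) ^ c" if pi: "\<pi> \<in> P" for \<pi>
  proof -
    have inr: "\<pi> (h v) \<in> {1..c}" if "v \<in> S" for v
    proof -
      have "h v \<in> {1..c}" using h that by (metis bij_betwE)
      thus ?thesis using pi permutes_in_image[of \<pi> "{1..c}" "h v"] unfolding P_def by simp
    qed
    have "B \<pi> = Pi {..<n} (\<lambda>v. if v \<in> S then {\<pi> (h v)} else UNIV)"
      unfolding B_def using S by (auto simp: Pi_def)
    hence "measure_pmf.prob (colouring n c) (B \<pi>)
        = (\<Prod>v\<in>{..<n}. measure_pmf.prob (pmf_of_set {1..c}) (if v \<in> S then {\<pi> (h v)} else UNIV))"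
      unfolding colouring_def by (simp add: measure_Pi_pmf_Pi)
    also have "\<dots> = (\<Prod>v\<in>S. 1 / real c)"
    proof (rule prod.mono_neutral_cong_right[OF _ S(1)])
      show "finite {..<n}" by simp
      show "\<forall>i\<in>{..<n} - S. measure_pmf.prob (pmf_of_set {1..c}) (if i \<in> S then {\<pi> (h i)} else UNIV) = 1"
        using c by simp
      show "\<And>x. x \<in> S \<Longrightarrow> measure_pmf.prob (pmf_of_set {1..c}) (if x \<in> S then {\<pi> (h x)} else UNIV) = 1 / real c"
        using c inr by (simp add: measure_pmf_single)
    qed
    also have "\<dots> = (1 / real c) ^ c" using S by simp
    finally show ?thesis .
  qed
  have "measure_pmf.prob (colouring n c) (\<Union>\<pi>\<in>P. B \<pi>) = (\<Sum>\<pi>\<in>P. measure_pmf.prob (colouring n c) (B \<pi>))"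
    by (rule measure_pmf.finite_measure_finite_Union[OF finP _ disj]) simp
  also have "\<dots> = fact c / real c ^ c" using mB cardP by (simp add: power_one_over)
  finally have "measure_pmf.prob (colouring n c) (\<Union>\<pi>\<in>P. B \<pi>) = fact c / real c ^ c" .
  moreover have "measure_pmf.prob (colouring n c) (\<Union>\<pi>\<in>P. B \<pi>) \<le> measure_pmf.prob (colouring n c) {f. tropical c f S}"
    by (rule measure_pmf.finite_measure_mono[OF sub]) simp
  ultimately show ?thesis by simp
qed


lemma pair_prob:
  "measure_pmf.prob (pair_pmf M N) (A \<times> B) = measure_pmf.prob M A * measure_pmf.prob N B"
proof -
  have "measure_pmf.prob (pair_pmf M N) (A \<times> B) = measure_pmf.prob (pair_pmf M N) ((A \<times> B) \<inter> set_pmf (pair_pmf M N))"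
    by (rule measure_Int_set_pmf[symmetric])
  also have "(A \<times> B) \<inter> set_pmf (pair_pmf M N) = (A \<inter> set_pmf M) \<times> (B \<inter> set_pmf N)" by auto
  also have "measure_pmf.prob (pair_pmf M N) \<dots> = measure_pmf.prob M (A \<inter> set_pmf M) * measure_pmf.prob N (B \<inter> set_pmf N)"
    by (rule measure_pmf_prob_product) (auto intro: countable_subset[OF _ countable_set_pmf])
  finally show ?thesis by (simp add: measure_Int_set_pmf)
qed

lemma expect_lb:
  fixes p :: real
  assumes p: "0 < p" "p < 1" and c: "1 \<le> c" "c < n"
  shows "measure_pmf.expectation (Gnpc n p c) (\<lambda>\<omega>. real (Xc n c \<omega>))
     \<ge> real (n choose c) * (1 - (1-p)^c)^(n-c) * (fact c / real c ^ c)"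
proof -
  define K where "K = {S. S \<subseteq> {..<n} \<and> card S = c}"
  define D where "D = (\<lambda>S. {E. dominating n E S})"
  define T where "T = (\<lambda>S. {f. tropical c f S})"
  have finK: "finite K" unfolding K_def by (rule finite_subset[of _ "Pow {..<n}"]) auto
  have cardK: "card K = n choose c" unfolding K_def using n_subsets[of "{..<n}" c] by simp
  have X: "real (Xc n c \<omega>) = (\<Sum>S\<in>K. indicator (D S \<times> T S) \<omega>)" for \<omega>
  proof -
    have "Xc n c \<omega> = card {S\<in>K. \<omega> \<in> D S \<times> T S}"
      unfolding Xc_def K_def D_def T_def by (rule arg_cong[where f=card]) (auto simp: mem_Times_iff)
    also have "real \<dots> = (\<Sum>S\<in>{S\<in>K. \<omega> \<in> D S \<times> T S}. 1)" by simp
    also have "\<dots> = (\<Sum>S\<in>K. indicator (D S \<times> T S) \<omega>)"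
      using finK by (simp add: sum.inter_filter[symmetric] indicator_def Int_def)
    finally show ?thesis .
  qed
  have "measure_pmf.expectation (Gnpc n p c) (\<lambda>\<omega>. real (Xc n c \<omega>))
      = measure_pmf.expectation (Gnpc n p c) (\<lambda>\<omega>. \<Sum>S\<in>K. indicator (D S \<times> T S) \<omega>)"
    by (simp add: X)
  also have "\<dots> = (\<Sum>S\<in>K. measure_pmf.expectation (Gnpc n p c) (indicator (D S \<times> T S)))"
    by (rule Bochner_Integration.integral_sum) (simp add: integrable_indicator_iff measure_pmf.emeasure_finite top.not_eq_extremum[symmetric])
  also have "\<dots> = (\<Sum>S\<in>K. measure_pmf.prob (Gnp n p) (D S) * measure_pmf.prob (colouring n c) (T S))"
    unfolding Gnpc_def by (simp add: pair_prob)
  also have "\<dots> \<ge> (\<Sum>S\<in>K. (1 - (1-p)^c)^(n-c) * (fact c / real c ^ c))"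
  proof (rule sum_mono)
    fix S assume S: "S \<in> K"
    have "measure_pmf.prob (Gnp n p) (D S) = (1 - (1-p)^c)^(n-c)"
      unfolding D_def using S p c by (intro prob_dom) (auto simp: K_def)
    moreover have "measure_pmf.prob (colouring n c) (T S) \<ge> fact c / real c ^ c"
      unfolding T_def using S c by (intro prob_trop) (auto simp: K_def)
    moreover have "(1 - (1-p)^c)^(n-c) \<ge> 0"
      using p by (intro zero_le_power) (simp add: power_le_one)
    ultimately show "(1 - (1-p)^c)^(n-c) * (fact c / real c ^ c) \<le> measure_pmf.prob (Gnp n p) (D S) * measure_pmf.prob (colouring n c) (T S)"
      by (metis mult_left_mono)
  qed
  finally show ?thesis using cardK by (simp add: mult.assoc)
qed


lemma bound_n:
  fixes p a :: real and n :: nat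
  assumes p: "0 < p" "p < 1" and a: "a = ln (1 / (1 - p))"
    and e1: "ln (real n) / a * ln (real n) \<ge> 1"
    and e2: "ln (real n) / a - ln (ln (real n) / a * ln (real n)) / a \<ge> 0"
    and e3: "ln (real n) / a + 2 < real n"
    and e4: "(ln (real n) / a + 2)^2 \<le> real n"
    and e5: "(1 - p) * (ln (real n) / a * ln (real n)) / real n \<le> 1/2"
  shows "exp ((ln (real n) / a - ln (ln (real n) / a * ln (real n)) / a + 1) * (ln (real n) - 2 * ln (ln (real n) / a + 2))
           - (1 - p) * (ln (real n) / a * ln (real n)) - 2 * ((1 - p) * (ln (real n) / a * ln (real n)))^2 / real n)
         \<le> measure_pmf.expectation (Gnpc n p (cfun p n)) (\<lambda>\<omega>. real (Xc n (cfun p n) \<omega>))"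
proof -
  define x where "x = real n"
  define q where "q = 1 - p"
  define L where "L = ln x / a"
  define r where "r = L - ln (L * ln x) / a"
  define c where "c = cfun p n"
  define x0 where "x0 = q * (L * ln x) / x"
  have q: "0 < q" "q < 1" using p unfolding q_def by auto
  have apos: "a > 0" unfolding a using p by simp
  have aq: "exp (-a) = q" unfolding a q_def using p by (simp add: ln_div exp_minus)
  have xne: "x \<noteq> 0"
  proof
    assume "x = 0"
    hence "ln (real n) = 0" unfolding x_def by simp
    thus False using e1 by simp
  qed
  hence x1: "x \<ge> 1" unfolding x_def by simp
  hence lnx: "ln x \<ge> 0" by simp
  have Lln: "L * ln x \<ge> 1" using e1 unfolding L_def x_def by simp
  have lnLln: "ln (L * ln x) \<ge> 0" using Lln by simp
  have r0: "r \<ge> 0" using e2 unfolding r_def L_def x_def by simp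
  have rL: "r \<le> L" unfolding r_def using lnLln apos by simp
  have cdef: "c = nat (\<lfloor>r\<rfloor> + 2)"
    unfolding c_def cfun_def Let_def r_def L_def x_def log_def a by simp
  have creal: "real c = real_of_int (\<lfloor>r\<rfloor> + 2)" unfolding cdef using r0 by simp
  have clo: "real c \<ge> r + 1" using creal by linarith
  have chi: "real c \<le> L + 2" using creal rL by linarith
  have c1: "1 \<le> c" using clo r0 by simp
  have cn: "c < n" using chi e3 unfolding L_def x_def by simp
  have cpos: "real c > 0" using c1 by simp
  have qc: "q ^ c \<le> x0"
  proof -
    have "q ^ c = exp (real c * (-a))" using aq exp_of_nat_mult[of c "-a"] by simp
    also have "\<dots> \<le> exp ((r + 1) * (-a))" using clo apos by (intro exp_mono) (simp add: mult_right_mono_neg)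
    also have "(r + 1) * (-a) = -a + (ln (L * ln x) - ln x)" unfolding r_def L_def using apos by (simp add: field_simps)
    also have "exp \<dots> = q * (L * ln x / x)"
    proof -
      have ea: "exp a = 1 / q" using aq q by (simp add: exp_minus field_simps)
      show ?thesis using ea Lln x1 q by (simp add: exp_add exp_diff field_simps)
    qed
    finally show ?thesis unfolding x0_def by simp
  qed
  have qc0: "0 \<le> q ^ c" using q by simp
  have x0h: "x0 \<le> 1/2" using e5 unfolding x0_def q_def L_def x_def by simp
  have qch: "q ^ c \<le> 1/2" using qc x0h by simp
  have qc1: "q ^ c < 1" using qch by simp
  have lnq: "ln (1 - q ^ c) \<ge> - x0 - 2 * x0^2"
  proof -
    have "ln (1 - q ^ c) \<ge> - (q ^ c) - 2 * (q ^ c)^2" by (rule ln_one_minus_pos_lower_bound[OF qc0 qch])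
    moreover have "(q ^ c)^2 \<le> x0^2" using qc qc0 by (intro power_mono) auto
    ultimately show ?thesis using qc by linarith
  qed
  have E1: "measure_pmf.expectation (Gnpc n p c) (\<lambda>\<omega>. real (Xc n c \<omega>))
     \<ge> real (n choose c) * (1 - q^c)^(n-c) * (fact c / real c ^ c)"
    using expect_lb[OF p c1 cn] unfolding q_def .
  have b1: "real (n choose c) \<ge> (x / real c) ^ c" unfolding x_def
    using binomial_ge_n_over_k_pow_k[of c n] cn by simp
  have b2: "(1 - q^c)^(n-c) \<ge> (1 - q^c)^n"
    using qc0 qc1 by (intro power_decreasing) auto
  have b3: "fact c / real c ^ c \<ge> 1 / real c ^ c"
    using cpos by (intro divide_right_mono) (auto simp: fact_ge_1)
  have "(x / real c) ^ c * (1 - q^c)^n * (1 / real c ^ c) \<le> real (n choose c) * (1 - q^c)^(n-c) * (fact c / real c ^ c)"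
    using b1 b2 b3 qc1 cpos x1
    by (intro mult_mono) (auto intro!: mult_nonneg_nonneg zero_le_power)
  also have "(x / real c) ^ c * (1 - q^c)^n * (1 / real c ^ c) = (x / real c^2) ^ c * (1 - q^c)^n"
    by (simp add: power_divide power2_eq_square power_mult_distrib)
  also have "(x / real c^2) ^ c = exp (real c * (ln x - 2 * ln (real c)))"
  proof -
    have "(x / real c^2) ^ c = exp (ln ((x / real c^2) ^ c))" using x1 cpos by simp
    also have "ln ((x / real c^2) ^ c) = real c * ln (x / real c^2)" using x1 cpos by (simp add: ln_realpow)
    also have "ln (x / real c^2) = ln x - 2 * ln (real c)" using x1 cpos by (simp add: ln_div ln_realpow)
    finally show ?thesis .
  qed
  also have "(1 - q^c)^n = exp (x * ln (1 - q^c))"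
  proof -
    have "(1 - q^c)^n = exp (ln ((1 - q^c)^n))" using qc1 by simp
    also have "ln ((1 - q^c)^n) = real n * ln (1 - q^c)" using qc1 by (simp add: ln_realpow)
    finally show ?thesis unfolding x_def .
  qed
  finally have E2: "exp (real c * (ln x - 2 * ln (real c))) * exp (x * ln (1 - q^c))
     \<le> measure_pmf.expectation (Gnpc n p c) (\<lambda>\<omega>. real (Xc n c \<omega>))" using E1 by linarith
  have f1: "real c * (ln x - 2 * ln (real c)) \<ge> (r + 1) * (ln x - 2 * ln (L + 2))"
  proof -
    have L2: "L + 2 > 0" using rL r0 by simp
    have "2 * ln (L + 2) = ln ((L+2)^2)" using L2 by (simp add: ln_realpow)
    also have "\<dots> \<le> ln x" using e4 L2 unfolding L_def x_def by (intro ln_mono) auto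
    finally have nn: "ln x - 2 * ln (L + 2) \<ge> 0" by simp
    have "ln (real c) \<le> ln (L + 2)" using chi cpos by simp
    hence "real c * (ln x - 2 * ln (real c)) \<ge> real c * (ln x - 2 * ln (L + 2))"
      using cpos by (intro mult_left_mono) auto
    moreover have "real c * (ln x - 2 * ln (L + 2)) \<ge> (r + 1) * (ln x - 2 * ln (L + 2))"
      using clo nn by (intro mult_right_mono) auto
    ultimately show ?thesis by linarith
  qed
  have f2: "x * ln (1 - q^c) \<ge> - (q * (L * ln x)) - 2 * (q * (L * ln x))^2 / x"
  proof -
    have "x * ln (1 - q^c) \<ge> x * (- x0 - 2 * x0^2)" using lnq x1 by (intro mult_left_mono) auto
    also have "x * (- x0 - 2 * x0^2) = - (q * (L * ln x)) - 2 * (q * (L * ln x))^2 / x"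
      unfolding x0_def using x1 by (simp add: field_simps power2_eq_square)
    finally show ?thesis .
  qed
  have "exp ((r + 1) * (ln x - 2 * ln (L + 2)) - (q * (L * ln x)) - 2 * (q * (L * ln x))^2 / x)
      \<le> exp (real c * (ln x - 2 * ln (real c))) * exp (x * ln (1 - q^c))"
    unfolding exp_add[symmetric] using f1 f2 by simp
  also note E2
  finally show ?thesis unfolding r_def L_def x_def q_def c_def by simp
qed

lemma ev_real: "eventually P at_top \<Longrightarrow> eventually (\<lambda>n. P (real n)) sequentially"
  using filterlim_real_sequentially by (simp add: filterlim_iff)

theorem mainTheorem9:
  fixes p :: real
  assumes "0 < p" and "p < 1"
  shows "filterlim (\<lambda>n. measure_pmf.expectation (Gnpc n p (cfun p n))
            (\<lambda>\<omega>. real (Xc n (cfun p n) \<omega>))) at_top sequentially"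
proof -
  define a where "a = ln (1 / (1 - p))"
  define q where "q = 1 - p"
  have apos: "a > 0" unfolding a_def using assms by simp
  have q: "q > 0" "q < 1" unfolding q_def using assms by auto
  have e1: "eventually (\<lambda>x::real. ln x / a * ln x \<ge> 1) at_top" using apos by real_asymp
  have e2: "eventually (\<lambda>x::real. ln x / a - ln (ln x / a * ln x) / a \<ge> 0) at_top" using apos by real_asymp
  have e3: "eventually (\<lambda>x::real. ln x / a + 2 < x) at_top" using apos by real_asymp
  have e4: "eventually (\<lambda>x::real. (ln x / a + 2)^2 \<le> x) at_top" using apos by real_asymp
  have e5: "eventually (\<lambda>x::real. q * (ln x / a * ln x) / x \<le> 1/2) at_top" using apos q by real_asymp
  have lim: "filterlim (\<lambda>x::real. (ln x / a - ln (ln x / a * ln x) / a + 1) * (ln x - 2 * ln (ln x / a + 2))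
           - q * (ln x / a * ln x) - 2 * (q * (ln x / a * ln x))^2 / x) at_top at_top"
    using apos q by real_asymp
  have lim2: "filterlim (\<lambda>n::nat. exp ((ln (real n) / a - ln (ln (real n) / a * ln (real n)) / a + 1) * (ln (real n) - 2 * ln (ln (real n) / a + 2))
           - q * (ln (real n) / a * ln (real n)) - 2 * (q * (ln (real n) / a * ln (real n)))^2 / real n)) at_top sequentially"
    by (rule filterlim_compose[OF exp_at_top filterlim_compose[OF lim filterlim_real_sequentially]])
  have ev: "eventually (\<lambda>n::nat. exp ((ln (real n) / a - ln (ln (real n) / a * ln (real n)) / a + 1) * (ln (real n) - 2 * ln (ln (real n) / a + 2))
           - q * (ln (real n) / a * ln (real n)) - 2 * (q * (ln (real n) / a * ln (real n)))^2 / real n)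
         \<le> measure_pmf.expectation (Gnpc n p (cfun p n)) (\<lambda>\<omega>. real (Xc n (cfun p n) \<omega>))) sequentially"
    using ev_real[OF e1] ev_real[OF e2] ev_real[OF e3] ev_real[OF e4] ev_real[OF e5]
  proof eventually_elim
    case (elim n)
    show ?case unfolding q_def by (rule bound_n[OF assms a_def]) (use elim in \<open>simp_all add: q_def\<close>)
  qed
  show ?thesis by (rule filterlim_at_top_mono[OF lim2 ev])
qed

end
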